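(* Let $q$ be a prime power, $1\le k\le n\le m$, let $g_1,\dots,g_n\in\mathbb{F}_{q^m}$ be linearly independent over $\mathbb{F}_q$, and let $\mathcal{G}$ be the Gabidulin code of dimension $k$ with respect to $g_1,\dots,g_n$. Let $f\in\mathcal{L}_q(x,\mathbb{F}_{q^m})$ with $k\le\deg_q(f)<n$ and let $\sigma_f=(f(g_1),\dots,f(g_n))$. Then $$d_R(\sigma_f,\mathcal{G})\ge n-\deg_q(f).$$ Moreover, if $f$ is monic, then $d_R(\sigma_f,\mathcal{G})=n-\deg_q(f)$ if and only if there exist an $\mathbb{F}_q$-subspace $H\subseteq\langle g_1,\dots,g_n\rangle$ of dimension $\deg_q(f)$ and $v\in\mathcal{L}_q(x,\mathbb{F}_{q^m})$ with $v=0$ or $\deg_q(v)\le k-1$ such that $$f(x)-v(x)=\prod_{h\in H}(x-h).$$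
   Context: A $q$-linearized polynomial over $\mathbb{F}_{q^m}$ is a polynomial $L(x)=\sum_{i=0}^{d}a_ix^{q^i}$ with $a_i\in\mathbb{F}_{q^m}$; if $a_d\ne0$, $d$ is its $q$-degree $\deg_q(L)$; $L$ is monic if $a_d=1$. $\mathcal{L}_q(x,\mathbb{F}_{q^m})$ is the set of these. Rank weight: fix a basis of $\mathbb{F}_{q^m}$ over $\mathbb{F}_q$; for $\mathbf{u}=(u_1,\dots,u_n)\in\mathbb{F}_{q^m}^n$, $w_R(\mathbf{u})$ is the rank of the $m\times n$ matrix over $\mathbb{F}_q$ whose $j$-th column is the coordinate vector of $u_j$ (equivalently $\dim_{\mathbb{F}_q}\langle u_1,\dots,u_n\rangle$). $d_R(\mathbf{u},\mathbf{v})=w_R(\mathbf{u}-\mathbf{v})$ and $d_R(\mathbf{u},C)=\min_{\mathbf{c}\in C}d_R(\mathbf{u},\mathbf{c})$. The Gabidulin code of dimension $k$ with respect to $\mathbb{F}_q$-linearly independent $g_1,\dots,g_n\in\mathbb{F}_{q^m}$ is $\mathcal{G}=\{(v(g_1),\dots,v(g_n)) : v\in\mathcal{L}_q(x,\mathbb{F}_{q^m}),\ v=0\text{ or }\deg_q(v)<k\}\subseteq\mathbb{F}_{q^m}^n$. *)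

theory Defs
  imports "HOL-Computational_Algebra.Computational_Algebra"
begin

(* The ambient field F_{q^m} is a finite field type 'a with CARD('a) = q^m.
   The subfield F_q is the set of roots of x^q - x. *)
definition Fq :: "nat \<Rightarrow> 'a::{field,finite} set" where
  "Fq q = {x. x ^ q = x}"

definition Fq_lin_indep_list :: "nat \<Rightarrow> 'a::{field,finite} list \<Rightarrow> bool" where
  "Fq_lin_indep_list q g \<longleftrightarrow>
     (\<forall>c::nat \<Rightarrow> 'a. (\<forall>i<length g. c i \<in> Fq q) \<longrightarrow>
        (\<Sum>i<length g. c i * g ! i) = 0 \<longrightarrow> (\<forall>i<length g. c i = 0))"

definition Fq_indep :: "nat \<Rightarrow> 'a::{field,finite} set \<Rightarrow> bool" where
  "Fq_indep q B \<longleftrightarrow>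
     (\<forall>c::'a \<Rightarrow> 'a. (\<forall>x\<in>B. c x \<in> Fq q) \<longrightarrow>
        (\<Sum>x\<in>B. c x * x) = 0 \<longrightarrow> (\<forall>x\<in>B. c x = 0))"

definition Fq_span :: "nat \<Rightarrow> 'a::{field,finite} set \<Rightarrow> 'a set" where
  "Fq_span q S = {(\<Sum>x\<in>T. c x * x) | T c. T \<subseteq> S \<and> (\<forall>x\<in>T. c x \<in> Fq q)}"

definition Fq_subspace :: "nat \<Rightarrow> 'a::{field,finite} set \<Rightarrow> bool" where
  "Fq_subspace q H \<longleftrightarrow> 0 \<in> H \<and> (\<forall>x\<in>H. \<forall>y\<in>H. x + y \<in> H)
     \<and> (\<forall>c\<in>Fq q. \<forall>x\<in>H. c * x \<in> H)"

definition Fq_dim :: "nat \<Rightarrow> 'a::{field,finite} set \<Rightarrow> nat" where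
  "Fq_dim q H = Max {card B | B. B \<subseteq> H \<and> Fq_indep q B}"

definition lin_poly :: "nat \<Rightarrow> 'a::{field,finite} poly \<Rightarrow> bool" where
  "lin_poly q L \<longleftrightarrow> (\<forall>i. coeff L i \<noteq> 0 \<longrightarrow> (\<exists>j. i = q ^ j))"

(* q-degree: the d with degree L = q^d (meaningful for nonzero linearized L) *)
definition qdeg :: "nat \<Rightarrow> 'a::{field,finite} poly \<Rightarrow> nat" where
  "qdeg q L = (THE d. degree L = q ^ d)"

definition rank_weight :: "nat \<Rightarrow> 'a::{field,finite} list \<Rightarrow> nat" where
  "rank_weight q u = Fq_dim q (Fq_span q (set u))"

definition rank_dist :: "nat \<Rightarrow> 'a::{field,finite} list \<Rightarrow> 'a list \<Rightarrow> nat" where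
  "rank_dist q u v = rank_weight q (map2 (-) u v)"

definition rank_dist_set :: "nat \<Rightarrow> 'a::{field,finite} list \<Rightarrow> 'a list set \<Rightarrow> nat" where
  "rank_dist_set q u C = Min {rank_dist q u c | c. c \<in> C}"

definition gabidulin :: "nat \<Rightarrow> nat \<Rightarrow> 'a::{field,finite} list \<Rightarrow> 'a list set" where
  "gabidulin q k g = {map (poly v) g | v. lin_poly q v \<and> (v = 0 \<or> qdeg q v < k)}"

end

theory Submission
  imports Defs
begin

lemma fiber_card:
  fixes \<phi> :: "'a::ab_group_add \<Rightarrow> 'b::ab_group_add"
  assumes fin: "finite V" and V0: "0 \<in> V" and Vd: "\<And>x y. x\<in>V \<Longrightarrow> y\<in>V \<Longrightarrow> x - y \<in> V"
    and hom: "\<And>x y. \<phi> (x - y) = \<phi> x - \<phi> y"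
  shows "card V = card {x\<in>V. \<phi> x = 0} * card (\<phi> ` V)"
proof -
  define K where "K = {x\<in>V. \<phi> x = 0}"
  define r where "r = (\<lambda>b. SOME a. a \<in> V \<and> \<phi> a = b)"
  have r: "r b \<in> V \<and> \<phi> (r b) = b" if "b \<in> \<phi> ` V" for b
    unfolding r_def by (rule someI_ex) (use that in auto)
  have Va: "x + y \<in> V" if "x\<in>V" "y\<in>V" for x y
    using Vd[of x "0 - y"] Vd[of 0 y] V0 that by simp
  have p0: "\<phi> 0 = 0" using hom[of 0 0] by simp
  have pa: "\<phi> (x + y) = \<phi> x + \<phi> y" for x y using hom[of x "0 - y"] hom[of 0 y] p0 by simp
  have "bij_betw (\<lambda>a. (a - r (\<phi> a), \<phi> a)) V (K \<times> \<phi> ` V)"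
  proof (rule bij_betw_byWitness[where f' = "\<lambda>(k,b). k + r b"])
    show "\<forall>a\<in>V. (\<lambda>(k,b). k + r b) (a - r (\<phi> a), \<phi> a) = a" by simp
    show "\<forall>z\<in>K \<times> \<phi> ` V. (\<lambda>a. (a - r (\<phi> a), \<phi> a)) ((\<lambda>(k,b). k + r b) z) = z"
    proof
      fix z assume "z \<in> K \<times> \<phi> ` V"
      then obtain k b where z: "z = (k, b)" "k \<in> K" "b \<in> \<phi> ` V" by blast
      have "\<phi> (k + r b) = b" using pa r[OF z(3)] z(2) unfolding K_def by simp
      thus "(\<lambda>a. (a - r (\<phi> a), \<phi> a)) ((\<lambda>(k,b). k + r b) z) = z" using z by simp
    qed
    show "(\<lambda>a. (a - r (\<phi> a), \<phi> a)) ` V \<subseteq> K \<times> \<phi> ` V"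
    proof
      fix z assume "z \<in> (\<lambda>a. (a - r (\<phi> a), \<phi> a)) ` V"
      then obtain a where a: "a \<in> V" "z = (a - r (\<phi> a), \<phi> a)" by blast
      have "r (\<phi> a) \<in> V" "\<phi> (r (\<phi> a)) = \<phi> a" using r[of "\<phi> a"] a(1) by auto
      hence "a - r (\<phi> a) \<in> K" using Vd[OF a(1)] hom unfolding K_def by simp
      thus "z \<in> K \<times> \<phi> ` V" using a by auto
    qed
    show "(\<lambda>(k,b). k + r b) ` (K \<times> \<phi> ` V) \<subseteq> V"
    proof
      fix z assume "z \<in> (\<lambda>(k,b). k + r b) ` (K \<times> \<phi> ` V)"
      then obtain kb where kb: "kb \<in> K \<times> \<phi> ` V" "z = (\<lambda>(k,b). k + r b) kb" by blast
      then obtain k b where z: "z = k + r b" "k \<in> K" "b \<in> \<phi> ` V" by (cases kb) auto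
      thus "z \<in> V" using Va r[OF z(3)] unfolding K_def by simp
    qed
  qed
  hence "card V = card (K \<times> \<phi> ` V)" by (rule bij_betw_same_card)
  thus ?thesis unfolding K_def by (simp add: card_cartesian_product)
qed

lemma field_pow_card:
  fixes x :: "'a :: {field,finite}"
  shows "x ^ card (UNIV :: 'a set) = x"
proof (cases "x = 0")
  case False
  have "x * (\<Prod>y\<in>UNIV-{0}. x * y) = x * x ^ (card (UNIV :: 'a set) - 1) * \<Prod>(UNIV-{0})"
    by (simp add: prod.distrib mult_ac)
  also have "x * x ^ (card (UNIV :: 'a set) - 1) = x ^ Suc (card (UNIV :: 'a set) - 1)"
    by (subst power_Suc) auto
  also have "Suc (card (UNIV :: 'a set) - 1) = card (UNIV :: 'a set)"
    using finite_UNIV_card_ge_0[where ?'a = 'a] by simp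
  also have "(\<Prod>y\<in>UNIV-{0}. x * y) = (\<Prod>y\<in>UNIV-{0}. y)"
    by (rule prod.reindex_bij_witness[of _ "\<lambda>y. y / x" "\<lambda>y. x * y"]) (use False in auto)
  finally show ?thesis
    by simp
qed (use finite_UNIV_card_ge_0[where ?'a = 'a] in auto)

lemma lin_poly_minus: "lin_poly q f \<Longrightarrow> lin_poly q v \<Longrightarrow> lin_poly q (f - v)"
  unfolding lin_poly_def by (metis coeff_diff diff_zero)



lemma prod_eq:
  fixes L :: "'a::field poly"
  assumes H: "finite H" and lc: "lead_coeff L = 1" and dL: "degree L = card H"
    and rt: "\<forall>h\<in>H. poly L h = 0"
  shows "L = (\<Prod>h\<in>H. [:-h, 1:])"
proof (rule ccontr)
  define P where "P = (\<Prod>h\<in>H. [:-h, 1:])"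
  assume ne: "L \<noteq> (\<Prod>h\<in>H. [:-h, 1:])"
  define D where "D = L - P"
  have D0: "D \<noteq> 0" using ne unfolding D_def P_def by simp
  have lP: "lead_coeff P = 1" unfolding P_def lead_coeff_prod by simp
  have dP: "degree P = card H" unfolding P_def by (subst degree_prod_eq_sum_degree) auto
  have cD: "coeff D (card H) = 0" unfolding D_def using lc lP dL dP by simp
  have "degree D \<le> card H" unfolding D_def using dL dP degree_diff_le_max[of L P] by simp
  moreover have "degree D \<noteq> card H" using cD D0 by (metis leading_coeff_0_iff)
  ultimately have dD: "degree D < card H" by simp
  have "H \<subseteq> {x. poly D x = 0}"
  proof
    fix h assume h: "h \<in> H"
    have "poly P h = 0" unfolding P_def poly_prod using H h by (intro prod_zero) auto
    thus "h \<in> {x. poly D x = 0}" using rt h unfolding D_def by simp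
  qed
  hence "card H \<le> card {x. poly D x = 0}" by (intro card_mono poly_roots_finite D0)
  also have "\<dots> \<le> degree D" by (rule card_poly_roots_bound[OF D0])
  finally show False using dD by simp
qed

lemma map2_minus_map: "map2 (-) (map a xs) (map b xs) = map (\<lambda>x. a x - b x) xs"
  by (induction xs) auto


context
  fixes q e :: nat
  assumes qchar: "prime (CHAR('a::{field,finite}))" and qe: "q = CHAR('a)^e" and e1: "e \<ge> 1"
begin

lemma q_ge2: "q \<ge> 2"
proof -
  have "CHAR('a) \<ge> 2" using qchar prime_ge_2_nat by blast
  hence "CHAR('a)^e \<ge> 2^e" by (simp add: power_mono)
  moreover have "(2::nat)^e \<ge> 2^1" using e1 by (intro power_increasing) auto
  ultimately show ?thesis using qe by simp
qed

lemma frob: "((x::'a) + y)^(q^j) = x^(q^j) + y^(q^j)"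
proof -
  have "q^j = CHAR('a)^(e*j)" using qe by (simp add: power_mult)
  thus ?thesis using freshmans_dream'[OF qchar] by blast
qed

lemma frob_diff: "((x::'a) - y)^(q^j) = x^(q^j) - y^(q^j)"
  using frob[of "x - y" y j] by (simp add: algebra_simps)

lemma frob1: "((x::'a) + y)^q = x^q + y^q"
  using frob[of x y 1] by simp

lemma frob_diff1: "((x::'a) - y)^q = x^q - y^q"
  using frob_diff[of x y 1] by simp

lemma Fq_pow: "(c::'a) \<in> Fq q \<Longrightarrow> c^(q^j) = c"
proof (induction j)
  case (Suc j)
  have "c^(q^Suc j) = (c^q)^(q^j)" by (simp add: power_mult mult.commute)
  also have "c^q = c" using Suc.prems by (simp add: Fq_def)
  finally show ?case using Suc by simp
qed simp

lemma Fq_0: "0 \<in> (Fq q :: 'a set)" using q_ge2 by (simp add: Fq_def)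
lemma Fq_1: "1 \<in> (Fq q :: 'a set)" by (simp add: Fq_def)
lemma Fq_add: "(x::'a) \<in> Fq q \<Longrightarrow> y \<in> Fq q \<Longrightarrow> x + y \<in> Fq q"
  by (simp add: Fq_def frob1)
lemma Fq_diff: "(x::'a) \<in> Fq q \<Longrightarrow> y \<in> Fq q \<Longrightarrow> x - y \<in> Fq q"
  by (simp add: Fq_def frob_diff1)
lemma Fq_uminus: "(x::'a) \<in> Fq q \<Longrightarrow> - x \<in> Fq q"
  using Fq_diff[OF Fq_0, of x] by simp
lemma Fq_mult: "(x::'a) \<in> Fq q \<Longrightarrow> y \<in> Fq q \<Longrightarrow> x * y \<in> Fq q"
  by (simp add: Fq_def power_mult_distrib)
lemma Fq_div: "(x::'a) \<in> Fq q \<Longrightarrow> y \<in> Fq q \<Longrightarrow> x / y \<in> Fq q"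
  by (simp add: Fq_def power_divide)

lemma lin_poly_add: "lin_poly q L \<Longrightarrow> poly L ((x::'a) + y) = poly L x + poly L y"
proof -
  assume L: "lin_poly q L"
  have "coeff L i * (x + y)^i = coeff L i * x^i + coeff L i * y^i" for i
  proof (cases "coeff L i = 0")
    case False
    then obtain j where "i = q^j" using L unfolding lin_poly_def by blast
    thus ?thesis by (simp add: frob distrib_left)
  qed simp
  thus ?thesis unfolding poly_altdef by (simp add: sum.distrib)
qed

lemma lin_poly_scale: "lin_poly q L \<Longrightarrow> c \<in> Fq q \<Longrightarrow> poly L (c * (x::'a)) = c * poly L x"
proof -
  assume L: "lin_poly q L" and c: "c \<in> Fq q"
  have h: "coeff L i * (c * x)^i = c * (coeff L i * x^i)" for i
  proof (cases "coeff L i = 0")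
    case False
    then obtain j where "i = q^j" using L unfolding lin_poly_def by blast
    thus ?thesis using Fq_pow[OF c] by (simp add: power_mult_distrib)
  qed simp
  show ?thesis unfolding poly_altdef sum_distrib_left by (intro sum.cong refl h)
qed

lemma lin_poly_diff: "lin_poly q L \<Longrightarrow> poly L ((x::'a) - y) = poly L x - poly L y"
  using lin_poly_add[of L "x - y" y] by (simp add: algebra_simps)

lemma lin_poly_zero: "lin_poly q L \<Longrightarrow> poly L (0::'a) = 0"
  using lin_poly_diff[of L 0 0] by simp

lemma lin_poly_sum: "lin_poly q L \<Longrightarrow> (\<forall>x\<in>T. c x \<in> Fq q) \<Longrightarrow>
   poly L (\<Sum>x\<in>T. c x * (h x::'a)) = (\<Sum>x\<in>T. c x * poly L (h x))"
proof (induction T rule: infinite_finite_induct)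
  case (insert x F)
  thus ?case by (simp add: lin_poly_add lin_poly_scale)
qed (simp_all add: lin_poly_zero)


lemma Fq_card_ge2: "card (Fq q :: 'a set) \<ge> 2"
proof -
  have "{0,1} \<subseteq> (Fq q :: 'a set)" using Fq_0 Fq_1 by auto
  hence "card {0::'a,1} \<le> card (Fq q :: 'a set)" by (intro card_mono) auto
  thus ?thesis by simp
qed

lemma span_char: "Fq_span q (S::'a set) = {(\<Sum>x\<in>S. c x * x) | c. \<forall>x\<in>S. c x \<in> Fq q}"
proof (intro equalityI subsetI)
  fix z assume "z \<in> Fq_span q S"
  then obtain T c where T: "T \<subseteq> S" "\<forall>x\<in>T. c x \<in> Fq q" and z: "z = (\<Sum>x\<in>T. c x * x)"
    unfolding Fq_span_def by blast
  define c' where "c' = (\<lambda>x. if x \<in> T then c x else 0)"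
  have "(\<Sum>x\<in>S. c' x * x) = (\<Sum>x\<in>T. c x * x)"
    unfolding c'_def using T(1) by (intro sum.mono_neutral_cong_right) auto
  moreover have "\<forall>x\<in>S. c' x \<in> Fq q" using T(2) Fq_0 unfolding c'_def by auto
  ultimately have "z = (\<Sum>x\<in>S. c' x * x) \<and> (\<forall>x\<in>S. c' x \<in> Fq q)" using z by simp
  thus "z \<in> {(\<Sum>x\<in>S. c x * x) | c. \<forall>x\<in>S. c x \<in> Fq q}" by blast
next
  fix z assume "z \<in> {(\<Sum>x\<in>S. c x * x) | c. \<forall>x\<in>S. c x \<in> Fq q}"
  thus "z \<in> Fq_span q S" unfolding Fq_span_def by blast
qed

lemma span_subspace: "Fq_subspace q (Fq_span q (S::'a set))"
  unfolding Fq_subspace_def span_char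
proof (intro conjI ballI)
  show "0 \<in> {(\<Sum>x\<in>S. c x * x) | c. \<forall>x\<in>S. c x \<in> Fq q}"
    using Fq_0 by (intro CollectI exI[of _ "\<lambda>_. 0"]) auto
next
  fix a b assume "a \<in> {(\<Sum>x\<in>S. c x * x) | c. \<forall>x\<in>S. c x \<in> Fq q}"
    "b \<in> {(\<Sum>x\<in>S. c x * x) | c. \<forall>x\<in>S. c x \<in> Fq q}"
  then obtain c1 c2 where c: "\<forall>x\<in>S. c1 x \<in> Fq q" "\<forall>x\<in>S. c2 x \<in> Fq q"
    and ab: "a = (\<Sum>x\<in>S. c1 x * x)" "b = (\<Sum>x\<in>S. c2 x * x)" by blast
  have "a + b = (\<Sum>x\<in>S. (c1 x + c2 x) * x)" unfolding ab by (simp add: sum.distrib distrib_right)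
  thus "a + b \<in> {(\<Sum>x\<in>S. c x * x) | c. \<forall>x\<in>S. c x \<in> Fq q}" using c Fq_add
    by (intro CollectI exI[of _ "\<lambda>x. c1 x + c2 x"]) auto
next
  fix d a :: 'a assume d: "d \<in> Fq q" and "a \<in> {(\<Sum>x\<in>S. c x * x) | c. \<forall>x\<in>S. c x \<in> Fq q}"
  then obtain c1 where c: "\<forall>x\<in>S. c1 x \<in> Fq q" and ab: "a = (\<Sum>x\<in>S. c1 x * x)" by blast
  have "d * a = (\<Sum>x\<in>S. (d * c1 x) * x)" unfolding ab by (simp add: sum_distrib_left mult.assoc)
  thus "d * a \<in> {(\<Sum>x\<in>S. c x * x) | c. \<forall>x\<in>S. c x \<in> Fq q}" using c d Fq_mult
    by (intro CollectI exI[of _ "\<lambda>x. d * c1 x"]) auto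
qed

lemma subset_span: "(S::'a set) \<subseteq> Fq_span q S"
proof
  fix x assume x: "x \<in> S"
  have "(\<Sum>y\<in>S. (if y = x then 1 else 0::'a) * y) = (\<Sum>y\<in>S. if y = x then y else 0)"
    by (rule sum.cong) auto
  also have "\<dots> = x" using x by simp
  finally have e: "x = (\<Sum>y\<in>S. (if y = x then 1 else 0::'a) * y)" by simp
  have a: "\<forall>y\<in>S. (if y = x then 1 else 0::'a) \<in> Fq q" using Fq_1 Fq_0 by auto
  show "x \<in> Fq_span q S" unfolding span_char
    by (intro CollectI exI[of _ "\<lambda>y. if y = x then 1 else 0::'a"] conjI) (fact e, fact a)
qed

lemma subspace_sum: "Fq_subspace q (W::'a set) \<Longrightarrow> (\<forall>x\<in>T. f x \<in> W) \<Longrightarrow> sum f T \<in> W"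
  by (induction T rule: infinite_finite_induct) (auto simp: Fq_subspace_def)

lemma subspace_scale: "Fq_subspace q (W::'a set) \<Longrightarrow> c \<in> Fq q \<Longrightarrow> x \<in> W \<Longrightarrow> c * x \<in> W"
  by (auto simp: Fq_subspace_def)

lemma subspace_diff: "Fq_subspace q (W::'a set) \<Longrightarrow> x \<in> W \<Longrightarrow> y \<in> W \<Longrightarrow> x - y \<in> W"
proof -
  assume W: "Fq_subspace q W" and xy: "x \<in> W" "y \<in> W"
  have "(-1) * y \<in> W" using subspace_scale[OF W Fq_uminus[OF Fq_1] xy(2)] .
  hence "x + (-1) * y \<in> W" using W xy by (auto simp: Fq_subspace_def)
  thus ?thesis by simp
qed

lemma span_sub: "Fq_subspace q (W::'a set) \<Longrightarrow> B \<subseteq> W \<Longrightarrow> Fq_span q B \<subseteq> W"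
proof
  fix z assume W: "Fq_subspace q W" and B: "B \<subseteq> W" and "z \<in> Fq_span q B"
  then obtain c where c: "\<forall>x\<in>B. c x \<in> Fq q" and z: "z = (\<Sum>x\<in>B. c x * x)"
    unfolding span_char by blast
  show "z \<in> W" unfolding z using W B c by (intro subspace_sum) (auto intro: subspace_scale)
qed

lemma span_of_subspace: "Fq_subspace q (W::'a set) \<Longrightarrow> Fq_span q W = W"
  using span_sub subset_span by blast

lemma indep_card: "Fq_indep q (B::'a set) \<Longrightarrow> card (Fq_span q B) = card (Fq q :: 'a set) ^ card B"
proof -
  assume I: "Fq_indep q B"
  define F where "F = (\<lambda>c. \<Sum>x\<in>B. c x * x)"
  have eq: "Fq_span q B = F ` (PiE B (\<lambda>_. Fq q))"
  proof (intro equalityI subsetI)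
    fix z assume "z \<in> Fq_span q B"
    then obtain c where c: "\<forall>x\<in>B. c x \<in> Fq q" and z: "z = (\<Sum>x\<in>B. c x * x)"
      unfolding span_char by blast
    have "restrict c B \<in> PiE B (\<lambda>_. Fq q)" using c by auto
    moreover have "F (restrict c B) = z" unfolding F_def z by (intro sum.cong) auto
    ultimately show "z \<in> F ` (PiE B (\<lambda>_. Fq q))" by blast
  next
    fix z assume "z \<in> F ` (PiE B (\<lambda>_. Fq q))"
    then obtain c where "c \<in> PiE B (\<lambda>_. Fq q)" "z = F c" by blast
    thus "z \<in> Fq_span q B" unfolding span_char F_def by auto
  qed
  have inj: "inj_on F (PiE B (\<lambda>_. Fq q))"
  proof (rule inj_onI)
    fix c1 c2 assume c1: "c1 \<in> PiE B (\<lambda>_. Fq q)" and c2: "c2 \<in> PiE B (\<lambda>_. Fq q)" and e: "F c1 = F c2"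
    have "(\<Sum>x\<in>B. (c1 x - c2 x) * x) = F c1 - F c2"
      unfolding F_def by (simp add: sum_subtractf left_diff_distrib)
    hence "(\<Sum>x\<in>B. (c1 x - c2 x) * x) = 0" using e by simp
    moreover have "\<forall>x\<in>B. c1 x - c2 x \<in> Fq q" using c1 c2 Fq_diff by auto
    ultimately have "\<forall>x\<in>B. c1 x - c2 x = 0"
      using I[unfolded Fq_indep_def, rule_format, of "\<lambda>x. c1 x - c2 x"] by blast
    thus "c1 = c2" using c1 c2 by (intro PiE_ext) auto
  qed
  have "card (Fq_span q B) = card (PiE B (\<lambda>_. Fq q :: 'a set))" unfolding eq using inj by (rule card_image)
  also have "\<dots> = card (Fq q :: 'a set) ^ card B" by (simp add: card_PiE)
  finally show ?thesis .
qed

lemma insert_indep: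
  assumes I: "Fq_indep q (B::'a set)" and x: "x \<notin> Fq_span q B"
  shows "Fq_indep q (insert x B)"
  unfolding Fq_indep_def
proof (intro allI impI)
  fix c assume cF: "\<forall>y\<in>insert x B. c y \<in> Fq q" and s0: "(\<Sum>y\<in>insert x B. c y * y) = 0"
  have xB: "x \<notin> B" using x subset_span by blast
  have s1: "c x * x + (\<Sum>y\<in>B. c y * y) = 0" using s0 xB by simp
  have cx: "c x = 0"
  proof (rule ccontr)
    assume nz: "c x \<noteq> 0"
    have "(\<Sum>y\<in>B. (- c y / c x) * y) = - (\<Sum>y\<in>B. c y * y) / c x"
      by (simp add: sum_divide_distrib sum_negf)
    also have "\<dots> = (c x * x) / c x" using s1 eq_neg_iff_add_eq_0[of "c x * x" "\<Sum>y\<in>B. c y * y"] by simp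
    also have "\<dots> = x" using nz by simp
    finally have "x = (\<Sum>y\<in>B. (- c y / c x) * y)" by simp
    moreover have "\<forall>y\<in>B. - c y / c x \<in> Fq q" using cF by (auto intro!: Fq_div Fq_uminus)
    ultimately have "x \<in> Fq_span q B" unfolding span_char by (intro CollectI exI[of _ "\<lambda>y. - c y / c x"]) auto
    thus False using x by blast
  qed
  hence "(\<Sum>y\<in>B. c y * y) = 0" using s1 by simp
  hence "\<forall>y\<in>B. c y = 0" using I cF unfolding Fq_indep_def by blast
  thus "\<forall>y\<in>insert x B. c y = 0" using cx by blast
qed

lemma exists_basis:
  assumes W: "Fq_subspace q (W::'a set)"
  shows "\<exists>B\<subseteq>W. Fq_indep q B \<and> Fq_span q B = W"
proof -
  define S where "S = card ` {B. B \<subseteq> W \<and> Fq_indep q B}"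
  have fin: "finite S" unfolding S_def by simp
  have "{} \<in> {B. B \<subseteq> W \<and> Fq_indep q B}" unfolding Fq_indep_def by simp
  hence "S \<noteq> {}" unfolding S_def by blast
  hence "Max S \<in> S" using fin by (intro Max_in) auto
  then obtain B where B: "B \<subseteq> W" "Fq_indep q B" "card B = Max S" unfolding S_def by auto
  have "W \<subseteq> Fq_span q B"
  proof
    fix x assume xW: "x \<in> W"
    show "x \<in> Fq_span q B"
    proof (rule ccontr)
      assume nx: "x \<notin> Fq_span q B"
      hence xB: "x \<notin> B" using subset_span by blast
      have "insert x B \<in> {B. B \<subseteq> W \<and> Fq_indep q B}" using insert_indep[OF B(2) nx] B(1) xW by simp
      hence "card (insert x B) \<in> S" unfolding S_def by (rule imageI)
      hence "card (insert x B) \<le> Max S" using fin by simp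
      thus False using xB B(3) by simp
    qed
  qed
  thus ?thesis using B span_sub[OF W B(1)] by blast
qed

lemma dim_card:
  assumes W: "Fq_subspace q (W::'a set)"
  shows "card W = card (Fq q :: 'a set) ^ Fq_dim q W"
proof -
  obtain B0 where B0: "B0 \<subseteq> W" "Fq_indep q B0" "Fq_span q B0 = W" using exists_basis[OF W] by blast
  have cW: "card W = card (Fq q :: 'a set) ^ card B0" using indep_card[OF B0(2)] B0(3) by simp
  define S where "S = card ` {B. B \<subseteq> W \<and> Fq_indep q B}"
  have fin: "finite S" unfolding S_def by simp
  have SE: "{card B | B. B \<subseteq> W \<and> Fq_indep q B} = S" unfolding S_def by blast
  have "Max S = card B0"
  proof (rule Max_eqI[OF fin])
    fix y assume "y \<in> S"
    then obtain B where B: "B \<subseteq> W" "Fq_indep q B" "y = card B" unfolding S_def by auto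
    have "card (Fq q :: 'a set) ^ card B = card (Fq_span q B)" using indep_card[OF B(2)] by simp
    also have "\<dots> \<le> card W" using span_sub[OF W B(1)] by (intro card_mono) auto
    finally have "card (Fq q :: 'a set) ^ card B \<le> card (Fq q :: 'a set) ^ card B0" using cW by simp
    moreover have "1 < card (Fq q :: 'a set)" using Fq_card_ge2 by simp
    ultimately show "y \<le> card B0" using B(3) power_le_imp_le_exp by blast
  next
    show "card B0 \<in> S" unfolding S_def using B0 by simp
  qed
  thus ?thesis using cW unfolding Fq_dim_def SE by simp
qed


lemma of_nat_Fq: "(of_nat i :: 'a) \<in> Fq q"
proof (induction i)
  case 0 show ?case using Fq_0 by simp
next
  case (Suc i) thus ?case using Fq_add[OF Suc Fq_1] by (simp add: add.commute)
qed

lemma Fq_card_le: "card (Fq q :: 'a set) \<le> q"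
proof -
  define P where "P = monom (1::'a) q - monom 1 1"
  have polyP: "poly P x = x^q - x" for x by (simp add: P_def poly_monom)
  have "coeff P q = 1" using q_ge2 by (simp add: P_def coeff_monom)
  hence P0: "P \<noteq> 0" by auto
  have dP: "degree P \<le> q" unfolding P_def
    by (rule order.trans[OF degree_diff_le_max]) (use q_ge2 in \<open>auto intro: order.trans[OF degree_monom_le]\<close>)
  have "Fq q = {x. poly P x = 0}" by (auto simp: Fq_def polyP)
  thus ?thesis using card_poly_roots_bound[OF P0] dP by simp
qed

lemma Fq_card_ge_char: "card (Fq q :: 'a set) \<ge> CHAR('a)"
proof -
  have inj: "inj_on (of_nat :: nat \<Rightarrow> 'a) {..<CHAR('a)}"
  proof (rule inj_onI)
    fix i j assume i: "i \<in> {..<CHAR('a)}" and j: "j \<in> {..<CHAR('a)}" and e: "(of_nat i :: 'a) = of_nat j"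
    show "i = j"
    proof (rule ccontr)
      assume "i \<noteq> j"
      hence "i < j \<or> j < i" by auto
      thus False
      proof
        assume ij: "i < j"
        have "(of_nat (j - i) :: 'a) = of_nat j - of_nat i" using ij by (simp add: of_nat_diff)
        hence "(of_nat (j - i) :: 'a) = 0" using e by simp
        hence "CHAR('a) dvd (j - i)" using of_nat_eq_0_iff_char_dvd by blast
        thus False using ij j by (auto dest: dvd_imp_le)
      next
        assume ij: "j < i"
        have "(of_nat (i - j) :: 'a) = of_nat i - of_nat j" using ij by (simp add: of_nat_diff)
        hence "(of_nat (i - j) :: 'a) = 0" using e by simp
        hence "CHAR('a) dvd (i - j)" using of_nat_eq_0_iff_char_dvd by blast
        thus False using ij i by (auto dest: dvd_imp_le)
      qed
    qed
  qed
  have "CHAR('a) = card ((of_nat :: nat \<Rightarrow> 'a) ` {..<CHAR('a)})" using card_image[OF inj] by simp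
  also have "\<dots> \<le> card (Fq q :: 'a set)" using of_nat_Fq by (intro card_mono) auto
  finally show ?thesis .
qed

lemma UNIV_subspace: "Fq_subspace q (UNIV :: 'a set)"
  by (simp add: Fq_subspace_def)

lemma image_subspace:
  assumes L: "lin_poly q L" and W: "Fq_subspace q (W::'a set)"
  shows "Fq_subspace q (poly L ` W)"
  unfolding Fq_subspace_def
proof (intro conjI ballI)
  show "0 \<in> poly L ` W" using W lin_poly_zero[OF L] unfolding Fq_subspace_def by force
next
  fix x y assume "x \<in> poly L ` W" "y \<in> poly L ` W"
  then obtain a b where "a \<in> W" "b \<in> W" "x = poly L a" "y = poly L b" by blast
  moreover have "a + b \<in> W" using W \<open>a \<in> W\<close> \<open>b \<in> W\<close> unfolding Fq_subspace_def by blast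
  ultimately show "x + y \<in> poly L ` W" using lin_poly_add[OF L] by (metis image_eqI)
next
  fix c x :: 'a assume c: "c \<in> Fq q" and "x \<in> poly L ` W"
  then obtain a where "a \<in> W" "x = poly L a" by blast
  moreover have "c * a \<in> W" using W c \<open>a \<in> W\<close> unfolding Fq_subspace_def by blast
  ultimately show "c * x \<in> poly L ` W" using lin_poly_scale[OF L c] by (metis image_eqI)
qed

lemma kernel_subspace:
  assumes L: "lin_poly q L" and W: "Fq_subspace q (W::'a set)"
  shows "Fq_subspace q {x\<in>W. poly L x = 0}"
  using W lin_poly_zero[OF L] lin_poly_add[OF L] lin_poly_scale[OF L]
  unfolding Fq_subspace_def by auto

lemma span_image:
  assumes L: "lin_poly q L"
  shows "Fq_span q (poly L ` (G::'a set)) = poly L ` Fq_span q G"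
proof (intro equalityI)
  show "Fq_span q (poly L ` G) \<subseteq> poly L ` Fq_span q G"
  proof -
    have "poly L ` G \<subseteq> poly L ` Fq_span q G" using subset_span[of G] by (rule image_mono)
    thus ?thesis by (rule span_sub[OF image_subspace[OF L span_subspace]])
  qed
next
  show "poly L ` Fq_span q G \<subseteq> Fq_span q (poly L ` G)"
  proof
    fix z assume "z \<in> poly L ` Fq_span q G"
    then obtain y where y: "y \<in> Fq_span q G" and zy: "z = poly L y" by blast
    from y obtain c where c: "\<forall>x\<in>G. c x \<in> Fq q" and yc: "y = (\<Sum>x\<in>G. c x * x)"
      unfolding span_char by blast
    have z: "z = poly L (\<Sum>x\<in>G. c x * x)" using zy yc by simp
    have "z = (\<Sum>x\<in>G. c x * poly L x)" unfolding z using lin_poly_sum[OF L c, of "\<lambda>x. x"] by simp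
    also have "\<dots> \<in> Fq_span q (poly L ` G)"
    proof (rule subspace_sum[OF span_subspace], rule ballI)
      fix x assume x: "x \<in> G"
      have "poly L x \<in> Fq_span q (poly L ` G)" using subset_span[of "poly L ` G"] x by blast
      thus "c x * poly L x \<in> Fq_span q (poly L ` G)" using c x by (intro subspace_scale[OF span_subspace]) auto
    qed
    finally show "z \<in> Fq_span q (poly L ` G)" .
  qed
qed


lemma qdeg_degree:
  assumes L: "lin_poly q L" and L0: "L \<noteq> (0::'a poly)"
  shows "degree L = q ^ qdeg q L"
proof -
  have "coeff L (degree L) \<noteq> 0" using L0 by simp
  then obtain j where j: "degree L = q^j" using L unfolding lin_poly_def by blast
  have "\<exists>!d. degree L = q ^ d"
  proof (rule ex1I[of _ j])
    fix d assume "degree L = q^d"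
    thus "d = j" using j q_ge2 by (simp add: power_inject_exp)
  qed (rule j)
  hence "degree L = q ^ (THE d. degree L = q ^ d)" by (rule theI')
  thus ?thesis unfolding qdeg_def .
qed

lemma list_indep:
  assumes I: "Fq_lin_indep_list q (g::'a list)"
  shows "distinct g \<and> Fq_indep q (set g)"
proof
  show dg: "distinct g"
    unfolding distinct_conv_nth
  proof (intro allI impI)
    fix i j assume i: "i < length g" and j: "j < length g" and ij: "i \<noteq> j"
    show "g ! i \<noteq> g ! j"
    proof
      assume eq: "g ! i = g ! j"
      define c where "c = (\<lambda>l. if l = i then 1 else if l = j then -1 else 0::'a)"
      have cF: "\<forall>l<length g. c l \<in> Fq q" unfolding c_def using Fq_0 Fq_1 Fq_uminus[OF Fq_1] by auto
      have t: "c l * g ! l = (if l = i then g ! i else 0) - (if l = j then g ! j else 0)" for l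
        unfolding c_def using ij by auto
      have "(\<Sum>l<length g. c l * g ! l) = g ! i - g ! j"
        unfolding t sum_subtractf using i j by simp
      hence "(\<Sum>l<length g. c l * g ! l) = 0" using eq by simp
      hence "c i = 0" using I cF i unfolding Fq_lin_indep_list_def by blast
      thus False unfolding c_def by simp
    qed
  qed
  show "Fq_indep q (set g)"
    unfolding Fq_indep_def
  proof (intro allI impI)
    fix c :: "'a \<Rightarrow> 'a" assume cF: "\<forall>x\<in>set g. c x \<in> Fq q" and s0: "(\<Sum>x\<in>set g. c x * x) = 0"
    have "(\<Sum>l<length g. c (g ! l) * g ! l) = (\<Sum>x\<in>set g. c x * x)"
      by (rule sum.reindex_bij_betw[OF bij_betw_nth[OF dg refl refl]])
    hence z: "(\<Sum>l<length g. c (g ! l) * g ! l) = 0" using s0 by simp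
    have "\<forall>l<length g. c (g ! l) \<in> Fq q" using cF by simp
    hence "\<forall>l<length g. c (g ! l) = 0"
      using I[unfolded Fq_lin_indep_list_def, rule_format, of "\<lambda>l. c (g ! l)"] z by blast
    thus "\<forall>x\<in>set g. c x = 0" by (auto simp: in_set_conv_nth)
  qed
qed

lemma Fq_card_eq:
  assumes card: "card (UNIV::'a set) = q^m" and m1: "m \<ge> 1"
  shows "card (Fq q :: 'a set) = q"
proof -
  define \<phi> where "\<phi> = (\<lambda>x::'a. x^q - x)"
  have hom: "\<phi> (x - y) = \<phi> x - \<phi> y" for x y unfolding \<phi>_def frob_diff1 by simp
  have fc: "card (UNIV::'a set) = card {x\<in>UNIV. \<phi> x = 0} * card (\<phi> ` UNIV)"
    by (rule fiber_card) (auto intro: hom)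
  have K: "{x\<in>UNIV. \<phi> x = 0} = Fq q" by (auto simp: \<phi>_def Fq_def)
  define T where "T = (\<Sum>i<m. monom (1::'a) (q^i))"
  have pT: "poly T y = (\<Sum>i<m. y^(q^i))" for y by (simp add: T_def poly_sum poly_monom)
  have cT: "coeff T (q^(m-1)) = 1"
  proof -
    have "coeff T (q^(m-1)) = (\<Sum>i<m. if i = m - 1 then 1 else 0)"
      unfolding T_def coeff_sum coeff_monom using q_ge2 by (intro sum.cong) (auto simp: power_inject_exp)
    also have "\<dots> = 1" using m1 by simp
    finally show ?thesis .
  qed
  hence T0: "T \<noteq> 0" by auto
  have dT: "degree T \<le> q^(m-1)" unfolding T_def
  proof (rule degree_sum_le)
    fix i assume "i \<in> {..<m}"
    hence "q^i \<le> q^(m-1)" using q_ge2 by (intro power_increasing) auto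
    thus "degree (monom (1::'a) (q^i)) \<le> q^(m-1)" using degree_monom_le order.trans by blast
  qed simp
  have sub: "\<phi> ` UNIV \<subseteq> {y. poly T y = 0}"
  proof
    fix y assume "y \<in> \<phi> ` UNIV" then obtain x where y: "y = \<phi> x" by blast
    have "poly T y = (\<Sum>i<m. x^(q^Suc i) - x^(q^i))"
      unfolding pT y \<phi>_def frob_diff by (intro sum.cong refl) (simp add: power_mult[symmetric])
    also have "\<dots> = x^(q^m) - x^(q^0)" using sum_lessThan_telescope[of "\<lambda>i. x^(q^i)" m] by simp
    also have "x^(q^m) = x" using field_pow_card[of x] card by simp
    finally show "y \<in> {y. poly T y = 0}" by simp
  qed
  have "card (\<phi> ` UNIV) \<le> card {y. poly T y = 0}" by (rule card_mono[OF poly_roots_finite[OF T0] sub])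
  also have "\<dots> \<le> degree T" by (rule card_poly_roots_bound[OF T0])
  finally have ci: "card (\<phi> ` UNIV) \<le> q^(m-1)" using dT by simp
  have qm: "q^m = q * q^(m-1)" using m1 by (cases m) auto
  have "q * q^(m-1) \<le> card (Fq q :: 'a set) * q^(m-1)"
    using fc K card ci qm mult_le_mono2[OF ci, of "card (Fq q :: 'a set)"] by simp
  hence "q \<le> card (Fq q :: 'a set)" using q_ge2 by simp
  with Fq_card_le show ?thesis by simp
qed

lemma main:
  fixes g :: "'a list" and f :: "'a poly"
  assumes card: "card (UNIV :: 'a set) = q ^ m"
    and k1: "1 \<le> k" and kn: "k \<le> n" and nm: "n \<le> m"
    and lg: "length g = n"
    and gi: "Fq_lin_indep_list q g"
    and lf: "lin_poly q f" and f0: "f \<noteq> 0"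
    and kr: "k \<le> qdeg q f" and rn: "qdeg q f < n"
  shows "rank_dist_set q (map (poly f) g) (gabidulin q k g) \<ge> n - qdeg q f
    \<and> (lead_coeff f = 1 \<longrightarrow>
        (rank_dist_set q (map (poly f) g) (gabidulin q k g) = n - qdeg q f \<longleftrightarrow>
          (\<exists>H v. Fq_subspace q H \<and> H \<subseteq> Fq_span q (set g) \<and> Fq_dim q H = qdeg q f
              \<and> lin_poly q v \<and> (v = 0 \<or> qdeg q v \<le> k - 1)
              \<and> f - v = (\<Prod>h\<in>H. [:- h, 1:]))))"
proof -
  define r where "r = qdeg q f"
  define V where "V = Fq_span q (set g)"
  define \<sigma> where "\<sigma> = map (poly f) g"
  define C where "C = gabidulin q k g"
  define D where "D = (\<lambda>c. rank_dist q \<sigma> c) ` C"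
  have qg: "q \<ge> 2" by (rule q_ge2)
  have m1: "m \<ge> 1" using k1 kn nm by simp
  have s: "card (Fq q :: 'a set) = q" by (rule Fq_card_eq[OF card m1])
  have dg: "distinct g" and gI: "Fq_indep q (set g)" using list_indep[OF gi] by blast+
  have Vsub: "Fq_subspace q V" unfolding V_def by (rule span_subspace)
  have cV: "card V = q^n" unfolding V_def using indep_card[OF gI] s distinct_card[OF dg] lg by simp
  have degf: "degree f = q^r" unfolding r_def by (rule qdeg_degree[OF lf f0])
  have rank: "card V = card {x\<in>V. poly L x = 0} * q ^ rank_weight q (map (poly L) g)"
    if L: "lin_poly q L" for L
  proof -
    have "rank_weight q (map (poly L) g) = Fq_dim q (poly L ` V)"
      unfolding rank_weight_def V_def using span_image[OF L, of "set g"] by simp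
    moreover have "card (poly L ` V) = q ^ Fq_dim q (poly L ` V)"
      using dim_card[OF image_subspace[OF L Vsub]] s by simp
    moreover have "card V = card {x\<in>V. poly L x = 0} * card (poly L ` V)"
    proof (rule fiber_card)
      show "0 \<in> V" using Vsub unfolding Fq_subspace_def by blast
      show "x - y \<in> V" if "x \<in> V" "y \<in> V" for x y using subspace_diff[OF Vsub that] .
      show "poly L (x - y) = poly L x - poly L y" for x y by (rule lin_poly_diff[OF L])
    qed simp
    ultimately show ?thesis by simp
  qed
  have core: "lin_poly q (f - v) \<and> degree (f - v) = q^r \<and> lead_coeff (f - v) = lead_coeff f
     \<and> rank_dist q \<sigma> (map (poly v) g) = rank_weight q (map (poly (f - v)) g)
     \<and> card {x\<in>V. poly (f - v) x = 0} \<le> q^r"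
    if v: "lin_poly q v" "v = 0 \<or> qdeg q v < k" for v
  proof -
    have dv: "degree v < degree f"
    proof (cases "v = 0")
      case True thus ?thesis using degf qg by simp
    next
      case False
      hence "degree v = q^(qdeg q v)" by (rule qdeg_degree[OF v(1)])
      moreover have "qdeg q v < r" using v(2) False kr r_def by auto
      ultimately show ?thesis using degf qg by (simp add: power_strict_increasing)
    qed
    have "degree (f + - v) = degree f" by (rule degree_add_eq_left) (simp add: dv)
    hence de: "degree (f - v) = degree f" by simp
    have lc: "lead_coeff (f - v) = lead_coeff f" using de dv by (simp add: coeff_eq_0)
    have L0: "f - v \<noteq> 0" using lc f0 by auto
    have lv: "lin_poly q (f - v)" by (rule lin_poly_minus[OF lf v(1)])
    have rd: "rank_dist q \<sigma> (map (poly v) g) = rank_weight q (map (poly (f - v)) g)"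
    proof -
      have "(\<lambda>x. poly f x - poly v x) = poly (f - v)" by (simp add: fun_eq_iff)
      thus ?thesis unfolding rank_dist_def \<sigma>_def map2_minus_map by simp
    qed
    have "card {x\<in>V. poly (f - v) x = 0} \<le> card {x. poly (f - v) x = 0}"
      by (rule card_mono[OF poly_roots_finite[OF L0]]) auto
    also have "\<dots> \<le> degree (f - v)" by (rule card_poly_roots_bound[OF L0])
    finally show ?thesis using lv de degf lc rd by simp
  qed
  have Cchar: "c \<in> C \<longleftrightarrow> (\<exists>v. c = map (poly v) g \<and> lin_poly q v \<and> (v = 0 \<or> qdeg q v < k))" for c
    unfolding C_def gabidulin_def by blast
  have finC: "finite C"
  proof (rule finite_subset[OF _ finite_lists_length_eq[of "UNIV :: 'a set" n]])
    show "C \<subseteq> {xs. set xs \<subseteq> UNIV \<and> length xs = n}" using Cchar lg by auto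
  qed simp
  have finD: "finite D" unfolding D_def using finC by simp
  have "lin_poly q (0::'a poly)" unfolding lin_poly_def by simp
  hence C0: "map (poly 0) g \<in> C" using Cchar by blast
  hence D0: "D \<noteq> {}" unfolding D_def by blast
  have lowv: "n \<le> r + rank_weight q (map (poly (f - v)) g)"
    if v: "lin_poly q v" "v = 0 \<or> qdeg q v < k" for v
  proof -
    note cv = core[OF v]
    have "q^n = card {x\<in>V. poly (f - v) x = 0} * q ^ rank_weight q (map (poly (f - v)) g)"
      using rank[of "f - v"] cv cV by simp
    also have "\<dots> \<le> q^r * q ^ rank_weight q (map (poly (f - v)) g)"
      using cv by (intro mult_le_mono1) simp
    also have "\<dots> = q ^ (r + rank_weight q (map (poly (f - v)) g))" by (simp add: power_add)
    finally show ?thesis using qg by (simp add: power_le_imp_le_exp)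
  qed
  have low: "n - r \<le> d" if dD: "d \<in> D" for d
  proof -
    obtain c where c: "c \<in> C" "d = rank_dist q \<sigma> c" using dD unfolding D_def by blast
    then obtain v where v: "c = map (poly v) g" "lin_poly q v" "v = 0 \<or> qdeg q v < k" using Cchar by blast
    have "d = rank_weight q (map (poly (f - v)) g)" using core[OF v(2,3)] c v by simp
    thus ?thesis using lowv[OF v(2,3)] by simp
  qed
  have part1: "n - r \<le> Min D" using finD D0 low by simp
  have part2: "Min D = n - r \<longleftrightarrow>
          (\<exists>H v. Fq_subspace q H \<and> H \<subseteq> V \<and> Fq_dim q H = r
              \<and> lin_poly q v \<and> (v = 0 \<or> qdeg q v \<le> k - 1)
              \<and> f - v = (\<Prod>h\<in>H. [:- h, 1:]))" if mon: "lead_coeff f = 1"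
  proof
    assume mD: "Min D = n - r"
    have "Min D \<in> D" using finD D0 by (rule Min_in)
    then obtain c where c: "c \<in> C" "rank_dist q \<sigma> c = n - r" using mD unfolding D_def by auto
    then obtain v where v: "c = map (poly v) g" "lin_poly q v" "v = 0 \<or> qdeg q v < k" using Cchar by blast
    note cv = core[OF v(2,3)]
    define K where "K = {x\<in>V. poly (f - v) x = 0}"
    have w: "rank_weight q (map (poly (f - v)) g) = n - r" using cv c v by simp
    have "q^r * q^(n-r) = card K * q^(n-r)"
      using rank[of "f - v"] cv cV w rn r_def unfolding K_def by (simp flip: power_add)
    hence cK: "card K = q^r" using qg by simp
    have Ksub: "Fq_subspace q K" unfolding K_def by (rule kernel_subspace[OF _ Vsub]) (use cv in simp)
    have "q ^ Fq_dim q K = q ^ r" using dim_card[OF Ksub] s cK by simp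
    hence dK: "Fq_dim q K = r" using qg by (simp add: power_inject_exp)
    have KV: "K \<subseteq> V" unfolding K_def by blast
    have vk: "v = 0 \<or> qdeg q v \<le> k - 1" using v(3) by auto
    have "f - v = (\<Prod>h\<in>K. [:- h, 1:])"
      by (rule prod_eq) (use cv mon cK in \<open>auto simp: K_def\<close>)
    thus "\<exists>H v. Fq_subspace q H \<and> H \<subseteq> V \<and> Fq_dim q H = r
              \<and> lin_poly q v \<and> (v = 0 \<or> qdeg q v \<le> k - 1)
              \<and> f - v = (\<Prod>h\<in>H. [:- h, 1:])"
      using Ksub KV dK v(2) vk by blast
  next
    assume "\<exists>H v. Fq_subspace q H \<and> H \<subseteq> V \<and> Fq_dim q H = r
              \<and> lin_poly q v \<and> (v = 0 \<or> qdeg q v \<le> k - 1)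
              \<and> f - v = (\<Prod>h\<in>H. [:- h, 1:])"
    then obtain H v where H: "Fq_subspace q H" "H \<subseteq> V" "Fq_dim q H = r"
      and v: "lin_poly q v" "v = 0 \<or> qdeg q v \<le> k - 1" and fv: "f - v = (\<Prod>h\<in>H. [:- h, 1:])"
      by blast
    have vk: "v = 0 \<or> qdeg q v < k" using v(2) k1 by auto
    note cv = core[OF v(1) vk]
    define K where "K = {x\<in>V. poly (f - v) x = 0}"
    define w where "w = rank_weight q (map (poly (f - v)) g)"
    have cH: "card H = q^r" using dim_card[OF H(1)] s H(3) by simp
    have HK: "H \<subseteq> K"
    proof
      fix h assume h: "h \<in> H"
      have "poly (f - v) h = 0" unfolding fv poly_prod using h by (intro prod_zero) auto
      thus "h \<in> K" using h H(2) unfolding K_def by blast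
    qed
    have "card H \<le> card K" by (rule card_mono[OF _ HK]) simp
    hence "q^r * q^w \<le> card K * q^w" using cH by simp
    also have "\<dots> = q^n" using rank[of "f - v"] cv cV unfolding K_def w_def by simp
    finally have "q^(r + w) \<le> q^n" by (simp add: power_add)
    hence "r + w \<le> n" using qg by (simp add: power_le_imp_le_exp)
    moreover have "map (poly v) g \<in> C" using Cchar v(1) vk by blast
    hence "rank_dist q \<sigma> (map (poly v) g) \<in> D" unfolding D_def by blast
    hence "Min D \<le> w" using finD cv unfolding w_def by (metis Min_le)
    ultimately show "Min D = n - r" using part1 by simp
  qed
  have RD: "rank_dist_set q (map (poly f) g) (gabidulin q k g) = Min D"
    unfolding rank_dist_set_def D_def C_def \<sigma>_def by (simp add: Setcompr_eq_image)
  show ?thesis using part1 part2 unfolding RD r_def V_def by blast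
qed
end


lemma char_eq:
  fixes p e q m :: nat
  assumes p: "prime p" and qd: "q = p^e" and card: "card (UNIV::'a::{field,finite} set) = q^m"
  shows "CHAR('a) = p"
proof -
  have cpos: "CHAR('a) > 0" by (rule finite_imp_CHAR_pos) simp
  have cp: "prime CHAR('a)" by (rule prime_CHAR_semidom[OF cpos])
  have le: "card (Fq (CHAR('a)) :: 'a set) \<le> CHAR('a)"
    using Fq_card_le[where q="CHAR('a)" and e=1, OF cp] by simp
  have ge: "card (Fq (CHAR('a)) :: 'a set) \<ge> CHAR('a)"
    using Fq_card_ge_char[where q="CHAR('a)" and e=1, OF cp] by simp
  have U: "Fq_subspace (CHAR('a)) (UNIV::'a set)" by (simp add: Fq_subspace_def)
  define d where "d = Fq_dim (CHAR('a)) (UNIV::'a set)"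
  have cU: "card (UNIV::'a set) = CHAR('a) ^ d"
    using dim_card[where q="CHAR('a)" and e=1, OF cp _ _ U] le ge unfolding d_def by simp
  have "card {0::'a, 1} \<le> card (UNIV::'a set)" by (rule card_mono) auto
  hence c2: "card (UNIV::'a set) \<ge> 2" by simp
  have "d \<noteq> 0"
  proof
    assume "d = 0" thus False using cU c2 by simp
  qed
  hence "CHAR('a) dvd CHAR('a) ^ d" by (simp add: dvd_power)
  hence "CHAR('a) dvd p ^ (e * m)" using cU card qd by (simp add: power_mult)
  hence "CHAR('a) dvd p" by (rule prime_dvd_power[OF cp])
  thus ?thesis by (rule primes_dvd_imp_eq[OF cp p])
qed

theorem theorem1:
  fixes q m k n :: nat and g :: "'a::{field,finite} list" and f :: "'a poly"
  assumes "\<exists>p e. prime p \<and> e \<ge> 1 \<and> q = p ^ e"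
    and "card (UNIV :: 'a set) = q ^ m"
    and "1 \<le> k" "k \<le> n" "n \<le> m"
    and "length g = n"
    and "Fq_lin_indep_list q g"
    and "lin_poly q f" "f \<noteq> 0"
    and "k \<le> qdeg q f" "qdeg q f < n"
  shows "rank_dist_set q (map (poly f) g) (gabidulin q k g) \<ge> n - qdeg q f
    \<and> (lead_coeff f = 1 \<longrightarrow>
        (rank_dist_set q (map (poly f) g) (gabidulin q k g) = n - qdeg q f \<longleftrightarrow>
          (\<exists>H v. Fq_subspace q H \<and> H \<subseteq> Fq_span q (set g) \<and> Fq_dim q H = qdeg q f
              \<and> lin_poly q v \<and> (v = 0 \<or> qdeg q v \<le> k - 1)
              \<and> f - v = (\<Prod>h\<in>H. [:- h, 1:]))))"
proof -
  obtain p e where p: "prime p" "e \<ge> 1" "q = p^e" using assms(1) by blast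
  have ch: "CHAR('a) = p" by (rule char_eq[OF p(1) p(3) assms(2)])
  show ?thesis
    by (rule main[where e=e, OF _ _ _ assms(2-11)]) (use p ch in auto)
qed

end
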